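(* Let $\varphi_{-2,1}(\tau,z)=\vartheta_1(\tau,z)^2/\eta(\tau)^6$, and write its Fourier expansion as $\varphi_{-2,1}(\tau,z)=\sum_{n,r\in\mathbb{Z}} C_{-2}(4n-r^2)\,q^n\zeta^r$ (the coefficient depends only on $4n-r^2$). Then for every integer $\Delta\ge -1$ with $\Delta\equiv 0$ or $3 \pmod 4$ one has $(-1)^{\Delta+1}C_{-2}(\Delta)>0$.
   Context: $\tau$ is in the upper half-plane, $z\in\mathbb{C}$, $q=e^{2\pi i\tau}$, $\zeta=e^{2\pi i z}$. $\vartheta_1(\tau,z)=\sum_{n\in\mathbb{Z}}(-1)^n q^{\frac12(n-\frac12)^2}\zeta^{n-\frac12}$ and $\eta(\tau)=q^{1/24}\prod_{n\ge1}(1-q^n)$. The function $\varphi_{-2,1}$ is a weak Jacobi form of weight $-2$ and index $1$, so its coefficient of $q^n\zeta^r$ depends only on the discriminant $\Delta=4n-r^2$, which is $\equiv 0,3 \pmod 4$ and $\ge -1$ for nonzero coefficients. *)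

theory Defs
  imports "HOL-Analysis.Analysis"
begin

definition theta1 :: "complex \<Rightarrow> complex \<Rightarrow> complex" where
  "theta1 \<tau> z = (\<Sum>\<^sub>\<infinity>n::int. (-1) powi n *
      exp (2 * pi * \<i> * (\<tau> * (of_int n - 1/2)^2 / 2 + z * (of_int n - 1/2))))"

definition dedekind_eta :: "complex \<Rightarrow> complex" where
  "dedekind_eta \<tau> = exp (2 * pi * \<i> * \<tau> / 24) *
      (\<Prod>n. (1 - exp (2 * pi * \<i> * \<tau>) ^ Suc n))"

definition phi_m2_1 :: "complex \<Rightarrow> complex \<Rightarrow> complex" where
  "phi_m2_1 \<tau> z = theta1 \<tau> z ^ 2 / dedekind_eta \<tau> ^ 6"

definition phi_m2_1_coeff :: "int \<Rightarrow> int \<Rightarrow> complex" where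
  "phi_m2_1_coeff = (THE c. \<forall>\<tau> z. Im \<tau> > 0 \<longrightarrow>
      ((\<lambda>(n, r). c n r * exp (2 * pi * \<i> * \<tau>) powi n * exp (2 * pi * \<i> * z) powi r)
        has_sum phi_m2_1 \<tau> z) UNIV)"

end

theory Submission
  imports Defs "HOL-Computational_Algebra.Formal_Power_Series"
begin


lemma exp_powi: "exp w powi n = exp (of_int n * w)" for w :: complex
proof (cases "n \<ge> 0")
  case True
  define m where "m = nat n"
  have "n = int m" using True by (simp add: m_def)
  then show ?thesis by (simp add: power_int_def exp_of_nat_mult)
next
  case False
  define m where "m = nat (- n)"
  have "n = - int m" using False by (simp add: m_def)
  then show ?thesis by (simp add: power_int_minus exp_of_nat_mult exp_minus)
qed

lemma integral_exp_int:
  fixes k :: int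
  shows "((\<lambda>y::real. exp (2*pi*\<i> * of_int k * of_real y)) has_integral (if k = 0 then 1 else 0)) {0..1}"
proof (cases "k = 0")
  case True
  then show ?thesis using has_integral_const_real[of "1::complex" 0 1] by simp
next
  case False
  define c where "c = 2*pi*\<i> * of_int k"
  have c0: "c \<noteq> 0" using False by (simp add: c_def)
  have I: "((\<lambda>y. exp (c * of_real y)) has_integral ((\<lambda>y. exp (c * of_real y) / c) 1 - (\<lambda>y. exp (c * of_real y) / c) 0)) {0..1}"
  proof (rule fundamental_theorem_of_calculus[of 0 1 "\<lambda>y. exp (c * of_real y) / c"])
    fix x :: real assume "x \<in> {0..1}"
    have "((\<lambda>w. exp (c * w) / c) has_field_derivative exp (c * of_real x)) (at (of_real x))"
      proof -
      have "((\<lambda>w. c * w) has_field_derivative c * 1) (at (of_real x))"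
        by (rule DERIV_cmult) (rule DERIV_ident)
      then have "((\<lambda>w. exp (c * w)) has_field_derivative exp (c * of_real x) * (c * 1)) (at (of_real x))"
        by (rule DERIV_fun_exp)
      then have "((\<lambda>w. exp (c * w) / c) has_field_derivative exp (c * of_real x) * (c * 1) / c) (at (of_real x))"
        by (rule DERIV_cdivide)
      moreover have "exp (c * of_real x) * (c * 1) / c = exp (c * of_real x)" using c0 by (simp add: field_simps)
      ultimately show ?thesis by (simp only:)
    qed
    then show "((\<lambda>y. exp (c * of_real y) / c) has_vector_derivative exp (c * of_real x)) (at x within {0..1})"
      by (rule has_vector_derivative_real_field)
  qed simp
  have e1: "exp c = 1"
  proof -
    have "c = (2 * of_int k * pi) * \<i>" by (simp add: c_def)
    then show ?thesis using exp_integer_2pi[of "of_int k"] by simp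
  qed
  have z: "exp (c * of_real 1) / c - exp (c * of_real 0) / c = 0"
    using e1 by simp
  have I0: "((\<lambda>y. exp (c * of_real y)) has_integral 0) {0..1}" using I unfolding z .
  have fe: "(\<lambda>y::real. exp (2*pi*\<i> * of_int k * of_real y)) = (\<lambda>y. exp (c * of_real y))"
    by (simp add: c_def)
  show ?thesis unfolding fe using I0 False by simp
qed

lemma norm_E_powi: "norm (exp (2*pi*\<i> * of_real y) powi k) = 1" for y :: real
  by (simp add: norm_power_int)

lemma infsum_norm_subset:
  fixes a :: "'j \<Rightarrow> complex"
  assumes "(\<lambda>j. norm (a j)) summable_on J" "G \<subseteq> J"
  shows "infsum (\<lambda>j. norm (a j)) G \<le> infsum (\<lambda>j. norm (a j)) J"
  by (rule infsum_mono_neutral) (use assms in \<open>auto intro: summable_on_subset_banach\<close>)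

lemma fourier_unique:
  fixes a :: "'j \<Rightarrow> complex" and f :: "'j \<Rightarrow> int"
  assumes sa: "(\<lambda>j. norm (a j)) summable_on J"
  assumes H: "\<And>y::real. ((\<lambda>j. a j * exp (2*pi*\<i> * of_real y) powi f j) has_sum 0) J"
  shows "((\<lambda>j. a j) has_sum 0) {j\<in>J. f j = s}"
proof -
  define A where "A = {j\<in>J. f j = s}"
  define na where "na = (\<lambda>j. norm (a j))"
  have AJ: "A \<subseteq> J" by (auto simp: A_def)
  have sumJ: "a summable_on J" using sa abs_summable_summable by blast
  have sumA: "a summable_on A" using sumJ AJ summable_on_subset_banach by blast
  have naA: "na summable_on G" if "G \<subseteq> J" for G
    using sa that summable_on_subset_banach unfolding na_def by blast
  define b where "b = infsum a A"
  have bound: "norm b \<le> 2 * e" if e: "e > 0" for e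
  proof -
    obtain F where F: "finite F" "F \<subseteq> J" "dist (sum na F) (infsum na J) \<le> e"
      using infsum_finite_approximation[OF sa[folded na_def] e] by blast
    have split: "infsum na J = sum na F + infsum na (J - F)"
    proof -
      have "infsum na J = infsum na (F \<union> (J - F))" using F(2) by (simp add: Un_absorb1)
      also have "\<dots> = infsum na F + infsum na (J - F)"
        by (rule infsum_Un_disjoint) (use F naA in auto)
      finally show ?thesis using F(1) by simp
    qed
    have tailJ: "infsum na (J - F) \<le> e" using F(3) split by (simp add: dist_real_def)
    have tail: "norm (infsum (\<lambda>j. a j * w j) G) \<le> e" if "G \<subseteq> J - F" "\<And>j. norm (w j) = 1" for G w
    proof -
      have "(\<lambda>j. norm (a j * w j)) summable_on G"
        using naA[of G] that by (auto simp: norm_mult na_def)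
      then have "norm (infsum (\<lambda>j. a j * w j) G) \<le> infsum (\<lambda>j. norm (a j * w j)) G"
        by (rule norm_infsum_bound)
      also have "\<dots> = infsum na G" using that by (simp add: norm_mult na_def)
      also have "\<dots> \<le> infsum na (J - F)"
        using infsum_norm_subset[OF naA[of "J - F", unfolded na_def], of G] that by (auto simp: na_def)
      finally show ?thesis using tailJ by simp
    qed
    define E where "E = (\<lambda>y::real. exp (2*pi*\<i> * of_real y))"
    have E0: "E y \<noteq> 0" for y by (simp add: E_def)
    have normE: "norm (E y powi k) = 1" for y k unfolding E_def by (rule norm_E_powi)
    have pw: "norm (sum (\<lambda>j. a j * E y powi f j) F) \<le> e" for y
    proof -
      have sJ: "(\<lambda>j. a j * E y powi f j) summable_on J"
        using H[of y] unfolding E_def summable_on_def by blast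
      have "0 = infsum (\<lambda>j. a j * E y powi f j) J"
        using H[of y] unfolding E_def by (simp add: infsumI)
      also have "\<dots> = infsum (\<lambda>j. a j * E y powi f j) (F \<union> (J - F))" using F(2) by (simp add: Un_absorb1)
      also have "\<dots> = infsum (\<lambda>j. a j * E y powi f j) F + infsum (\<lambda>j. a j * E y powi f j) (J - F)"
        by (rule infsum_Un_disjoint) (use F sJ in \<open>auto intro: summable_on_subset_banach\<close>)
      finally have "sum (\<lambda>j. a j * E y powi f j) F = - infsum (\<lambda>j. a j * E y powi f j) (J - F)"
        using F(1) by (simp add: eq_neg_iff_add_eq_0 add.commute)
      then have "norm (sum (\<lambda>j. a j * E y powi f j) F) = norm (infsum (\<lambda>j. a j * E y powi f j) (J - F))"
        by simp
      also have "\<dots> \<le> e" by (rule tail) (auto simp: normE)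
      finally show ?thesis .
    qed
    define g where "g = (\<lambda>y. E y powi (-s) * sum (\<lambda>j. a j * E y powi f j) F)"
    have geq: "g = (\<lambda>y. \<Sum>j\<in>F. a j * exp (2*pi*\<i> * of_int (f j - s) * of_real y))"
    proof
      fix y
      have "E y powi (-s) * (a j * E y powi f j) = a j * exp (2*pi*\<i> * of_int (f j - s) * of_real y)" for j
      proof -
        have "E y powi (-s) * (a j * E y powi f j) = a j * (E y powi (f j + (-s)))"
          using E0[of y] power_int_add[of "E y" "f j" "-s"] by (simp add: mult_ac)
        also have "\<dots> = a j * exp (2*pi*\<i> * of_int (f j - s) * of_real y)"
          unfolding E_def exp_powi by (simp add: mult_ac)
        finally show ?thesis .
      qed
      note eqs = this
      show "g y = (\<Sum>j\<in>F. a j * exp (2*pi*\<i> * of_int (f j - s) * of_real y))"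
        unfolding g_def sum_distrib_left by (rule sum.cong[OF refl]) (rule eqs)
    qed
    have gint: "(g has_integral (\<Sum>j\<in>F. a j * (if f j - s = 0 then 1 else 0))) {0..1}"
      unfolding geq
      by (rule has_integral_sum[OF F(1)]) (intro has_integral_mult_right integral_exp_int)
    have "(\<Sum>j\<in>F. a j * (if f j - s = 0 then 1 else 0)) = sum a (F \<inter> A)"
    proof -
      have "(\<Sum>j\<in>F. a j * (if f j - s = 0 then 1 else 0)) = (\<Sum>j\<in>F. if j \<in> A then a j else 0)"
        using F(2) by (intro sum.cong) (auto simp: A_def)
      also have "\<dots> = sum a (F \<inter> A)" using F(1) by (simp add: sum.inter_restrict)
      finally show ?thesis .
    qed
    with gint have gint': "(g has_integral sum a (F \<inter> A)) (cbox 0 1)" by simp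
    have pwg: "norm (g y) \<le> e" for y unfolding g_def using pw[of y] by (simp add: norm_mult normE)
    have n1: "norm (sum a (F \<inter> A)) \<le> e"
      using has_integral_bound[OF _ gint', of e] e pwg by simp
    have "b = infsum a ((F \<inter> A) \<union> (A - F))" unfolding b_def by (rule arg_cong[where f="infsum a"]) blast
    also have "\<dots> = infsum a (F \<inter> A) + infsum a (A - F)"
      by (rule infsum_Un_disjoint) (use F sumA in \<open>auto intro: summable_on_subset_banach\<close>)
    finally have "b = sum a (F \<inter> A) + infsum (\<lambda>j. a j * 1) (A - F)" using F(1) by simp
    moreover have "norm (infsum (\<lambda>j. a j * 1) (A - F)) \<le> e"
      by (rule tail) (use AJ in auto)
    ultimately have "norm b \<le> norm (sum a (F \<inter> A)) + e"
      using norm_triangle_ineq[of "sum a (F \<inter> A)" "infsum (\<lambda>j. a j * 1) (A - F)"] by simp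
    with n1 show ?thesis by simp
  qed
  have "b = 0"
  proof (rule ccontr)
    assume "b \<noteq> 0"
    then have "norm b > 0" by simp
    with bound[of "norm b / 4"] show False by simp
  qed
  then show ?thesis using sumA unfolding A_def b_def by (metis has_sum_infsum)
qed

lemma coeff_unique:
  fixes c c' :: "int \<Rightarrow> int \<Rightarrow> complex"
  assumes hc: "\<And>\<tau> z. Im \<tau> > 0 \<Longrightarrow> ((\<lambda>(n, r). c n r * exp (2 * pi * \<i> * \<tau>) powi n * exp (2 * pi * \<i> * z) powi r) has_sum P \<tau> z) UNIV"
  assumes hc': "\<And>\<tau> z. Im \<tau> > 0 \<Longrightarrow> ((\<lambda>(n, r). c' n r * exp (2 * pi * \<i> * \<tau>) powi n * exp (2 * pi * \<i> * z) powi r) has_sum P \<tau> z) UNIV"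
  shows "c = c'"
proof -
  define d where "d = (\<lambda>n r. c n r - c' n r)"
  have hd: "((\<lambda>(n, r). d n r * exp (2 * pi * \<i> * \<tau>) powi n * exp (2 * pi * \<i> * z) powi r) has_sum 0) UNIV"
    if "Im \<tau> > 0" for \<tau> z
  proof -
    have "((\<lambda>x. (\<lambda>(n, r). c n r * exp (2 * pi * \<i> * \<tau>) powi n * exp (2 * pi * \<i> * z) powi r) x
        + - (\<lambda>(n, r). c' n r * exp (2 * pi * \<i> * \<tau>) powi n * exp (2 * pi * \<i> * z) powi r) x) has_sum (P \<tau> z + - P \<tau> z)) UNIV"
      by (rule has_sum_add[OF hc[OF that] has_sum_uminusI[OF hc'[OF that]]])
    then show ?thesis by (simp add: d_def case_prod_unfold algebra_simps)
  qed
  have step1: "((\<lambda>(n, r). d n r * exp (2 * pi * \<i> * \<tau>) powi n) has_sum 0) {j. snd j = s}"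
    if "Im \<tau> > 0" for \<tau> s
  proof -
    have "((\<lambda>j. (\<lambda>(n, r). d n r * exp (2 * pi * \<i> * \<tau>) powi n) j) has_sum 0) {j \<in> UNIV. snd j = s}"
    proof (rule fourier_unique)
      show "((\<lambda>j. (case j of (n, r) \<Rightarrow> d n r * exp (2 * pi * \<i> * \<tau>) powi n) * exp (2 * pi * \<i> * of_real y) powi snd j) has_sum 0) UNIV" for y
        using hd[OF that, of "of_real y"] by (simp add: case_prod_unfold)
      have "(\<lambda>j. (case j of (n, r) \<Rightarrow> d n r * exp (2 * pi * \<i> * \<tau>) powi n)) summable_on UNIV"
        using hd[OF that, of 0] unfolding summable_on_def by (auto simp: case_prod_unfold)
      then show "(\<lambda>j. norm (case j of (n, r) \<Rightarrow> d n r * exp (2 * pi * \<i> * \<tau>) powi n)) summable_on UNIV"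
        using summable_on_iff_abs_summable_on_complex by blast
    qed
    then show ?thesis by simp
  qed
  have "d m s = 0" for m s
  proof -
    define w :: complex where "w = exp (- 2 * of_real pi)"
    have w0: "w \<noteq> 0" by (simp add: w_def)
    have Q: "exp (2 * pi * \<i> * (of_real y + \<i>)) = w * exp (2 * pi * \<i> * of_real y)" for y :: real
    proof -
      have "2 * pi * \<i> * (of_real y + \<i>) = - 2 * of_real pi + 2 * pi * \<i> * of_real y"
        by (simp add: algebra_simps)
      then show ?thesis by (simp only: exp_add w_def)
    qed
    have "((\<lambda>j. (\<lambda>(n, r). d n r * w powi n) j) has_sum 0) {j \<in> {j. snd j = s}. fst j = m}"
    proof (rule fourier_unique)
      show "((\<lambda>j. (case j of (n, r) \<Rightarrow> d n r * w powi n) * exp (2 * pi * \<i> * of_real y) powi fst j) has_sum 0) {j. snd j = s}" for y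
        using step1[of "of_real y + \<i>" s, unfolded Q] by (simp add: case_prod_unfold power_int_mult_distrib mult_ac)
      have "(\<lambda>j. (case j of (n, r) \<Rightarrow> d n r * w powi n)) summable_on {j. snd j = s}"
        using step1[of "\<i>" s] Q[of 0] unfolding summable_on_def by (auto simp: case_prod_unfold)
      then show "(\<lambda>j. norm (case j of (n, r) \<Rightarrow> d n r * w powi n)) summable_on {j. snd j = s}"
        using summable_on_iff_abs_summable_on_complex by blast
    qed
    moreover have "{j \<in> {j. snd j = s}. fst j = m} = {(m, s)}" by auto
    ultimately have "((\<lambda>j. (\<lambda>(n, r). d n r * w powi n) j) has_sum 0) {(m, s)}" by simp
    moreover have "((\<lambda>j. (\<lambda>(n, r). d n r * w powi n) j) has_sum (d m s * w powi m)) {(m, s)}"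
      by (rule has_sum_finiteI) auto
    ultimately have "d m s * w powi m = 0" using has_sum_unique by blast
    then show ?thesis using w0 by simp
  qed
  then show ?thesis by (auto simp: d_def fun_eq_iff)
qed


unbundle no vec_syntax
notation fps_nth (infixl \<open>$\<close> 75)

definition Ef :: "nat \<Rightarrow> 'a::comm_semiring_1 fps" where
  "Ef m = Abs_fps (\<lambda>k. if Suc m dvd k then 1 else 0)"

definition Qf :: "nat \<Rightarrow> 'a::comm_semiring_1 fps" where
  "Qf M = (\<Prod>m<M. Ef m ^ 6)"

definition pp :: "nat \<Rightarrow> nat" where
  "pp k = (Qf k :: nat fps) $ k"

definition fcast :: "nat fps \<Rightarrow> 'a::comm_semiring_1 fps" where
  "fcast A = Abs_fps (\<lambda>k. of_nat (A $ k))"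

lemma fcast_mult: "fcast (A * B) = (fcast A * fcast B :: 'a::comm_semiring_1 fps)"
  by (rule fps_ext) (simp add: fcast_def fps_mult_nth)

lemma fcast_one: "fcast 1 = (1 :: 'a::comm_semiring_1 fps)"
  by (rule fps_ext) (simp add: fcast_def)

lemma fcast_power: "fcast (A ^ n) = (fcast A ^ n :: 'a::comm_semiring_1 fps)"
  by (induction n) (simp_all add: fcast_one fcast_mult)

lemma fcast_Ef: "fcast (Ef m) = (Ef m :: 'a::comm_semiring_1 fps)"
  by (rule fps_ext) (simp add: fcast_def Ef_def)

lemma fcast_Qf: "fcast (Qf M) = (Qf M :: 'a::comm_semiring_1 fps)"
  by (induction M) (simp_all add: Qf_def fcast_one fcast_mult fcast_power fcast_Ef)

lemma Qf_nth: "(Qf M :: 'a::comm_semiring_1 fps) $ k = of_nat ((Qf M :: nat fps) $ k)"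
proof -
  have "(Qf M :: 'a fps) $ k = fcast (Qf M) $ k" by (simp add: fcast_Qf)
  then show ?thesis by (simp add: fcast_def)
qed

lemma mult_ge_left_nat:
  fixes A B :: "nat fps"
  assumes "B $ 0 \<ge> 1"
  shows "(A * B) $ k \<ge> A $ k"
proof -
  have "A $ k \<le> A $ k * B $ (k - k)" using assms by simp
  also have "\<dots> \<le> (\<Sum>i=0..k. A$i * B$(k - i))"
    by (rule member_le_sum[of k "{0..k}" "\<lambda>i. A$i * B$(k - i)"]) auto
  finally show ?thesis by (simp add: fps_mult_nth)
qed

lemma mult_stable:
  fixes A F :: "'a::comm_semiring_1 fps"
  assumes "F $ 0 = 1" "\<And>j. 0 < j \<Longrightarrow> j \<le> M \<Longrightarrow> F $ j = 0" "k \<le> M"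
  shows "(A * F) $ k = A $ k"
proof -
  have "(A * F) $ k = (\<Sum>i=0..k. A$i * F$(k - i))" by (simp add: fps_mult_nth)
  also have "\<dots> = (\<Sum>i\<in>{k}. A$i * F$(k - i))"
    by (rule sum.mono_neutral_right) (use assms in auto)
  finally show ?thesis using assms by simp
qed

lemma power_stable:
  fixes F :: "'a::comm_semiring_1 fps"
  assumes "F $ 0 = 1" "\<And>j. 0 < j \<Longrightarrow> j \<le> M \<Longrightarrow> F $ j = 0"
  shows "(F ^ n) $ 0 = 1 \<and> (\<forall>j. 0 < j \<longrightarrow> j \<le> M \<longrightarrow> (F ^ n) $ j = 0)"
proof (induction n)
  case 0
  then show ?case by simp
next
  case (Suc n)
  have "(F ^ Suc n) $ j = (F ^ n) $ j" if "j \<le> M" for j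
    using mult_stable[OF assms that, of "F ^ n"] by (simp add: mult.commute)
  with Suc assms show ?case by auto
qed

lemma Ef6_props: "((Ef m :: 'a::comm_semiring_1 fps) ^ 6) $ 0 = 1 \<and>
   (\<forall>j. 0 < j \<longrightarrow> j \<le> m \<longrightarrow> ((Ef m :: 'a fps) ^ 6) $ j = 0)"
  by (rule power_stable) (auto simp: Ef_def dest: dvd_imp_le)

lemma Qf_Suc: "Qf (Suc M) = Qf M * Ef M ^ 6"
  by (simp add: Qf_def)

lemma Qf_stable: "k \<le> M \<Longrightarrow> (Qf (Suc M) :: 'a::comm_semiring_1 fps) $ k = Qf M $ k"
  unfolding Qf_Suc by (rule mult_stable) (use Ef6_props in auto)

lemma Qf_pp0: "(Qf (k + d) :: nat fps) $ k = pp k"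
  by (induction d) (simp_all add: pp_def Qf_stable)

lemma Qf_pp: "M \<ge> k \<Longrightarrow> (Qf M :: nat fps) $ k = pp k"
  using Qf_pp0[of k "M - k"] by simp

lemma Qf_mono: "(Qf M :: nat fps) $ k \<le> Qf (Suc M) $ k"
  unfolding Qf_Suc by (rule mult_ge_left_nat) (use Ef6_props[of M, where 'a=nat] in simp)

lemma Qf_le_pp: "M \<le> k \<Longrightarrow> (Qf M :: nat fps) $ k \<le> pp k"
proof -
  assume "M \<le> k"
  have "(Qf M :: nat fps) $ k \<le> (Qf k :: nat fps) $ k"
    using lift_Suc_mono_le[of "\<lambda>M. (Qf M :: nat fps) $ k", OF Qf_mono \<open>M \<le> k\<close>] .
  then show ?thesis by (simp add: pp_def)
qed

lemma pp_pos: "pp k \<ge> 1"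
proof (cases k)
  case 0
  then show ?thesis by (simp add: pp_def Qf_def)
next
  case (Suc k')
  have "((Ef 0 :: nat fps) ^ 6) $ k \<ge> (Ef 0 :: nat fps) $ k"
  proof -
    have "((Ef 0 :: nat fps) ^ 5) $ 0 \<ge> 1" using power_stable[of "Ef 0 :: nat fps" 0 5] by (simp add: Ef_def)
    then have "(Ef 0 * (Ef 0 :: nat fps) ^ 5) $ k \<ge> (Ef 0 :: nat fps) $ k" by (rule mult_ge_left_nat)
    then show ?thesis by (simp add: numeral_eq_Suc)
  qed
  then have "(Qf 1 :: nat fps) $ k \<ge> 1" by (simp add: Qf_def Ef_def)
  also have "(Qf 1 :: nat fps) $ k \<le> pp k" using Suc by (intro Qf_le_pp) simp
  finally show ?thesis .
qed

lemma Ef_inv: "(Ef m :: 'a::comm_ring_1 fps) * (1 - fps_X ^ Suc m) = 1"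
proof (rule fps_ext)
  fix n
  have "((Ef m :: 'a fps) * (1 - fps_X ^ Suc m)) $ n = (Ef m :: 'a fps) $ n - (Ef m * fps_X ^ Suc m) $ n"
    by (simp add: algebra_simps)
  also have "\<dots> = (if n = 0 then 1 else 0)"
  proof (cases "n < Suc m")
    case True
    then show ?thesis by (auto simp: fps_X_power_mult_right_nth Ef_def simp del: power_Suc dest: dvd_imp_le)
  next
    case False
    then have "Suc m dvd n \<longleftrightarrow> Suc m dvd (n - Suc m)"
      by (simp add: dvd_minus_self)
    then show ?thesis using False by (simp add: fps_X_power_mult_right_nth Ef_def del: power_Suc)
  qed
  finally show "((Ef m :: 'a fps) * (1 - fps_X ^ Suc m)) $ n = (1 :: 'a fps) $ n" by simp
qed

lemma rad_Ef: "fps_conv_radius (Ef m :: 'a::{banach, real_normed_field} fps) \<ge> 1"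
  unfolding fps_conv_radius_def
proof (rule conv_radius_geI_ex')
  fix r :: real assume r: "0 < r" "ereal r < 1"
  then have r1: "r < 1" by simp
  show "summable (\<lambda>n. (Ef m :: 'a fps) $ n * of_real r ^ n)"
  proof (rule summable_comparison_test')
    show "summable (\<lambda>n. r ^ n)" using r r1 by (intro summable_geometric) simp
    fix n
    show "norm ((Ef m :: 'a fps) $ n * of_real r ^ n) \<le> r ^ n"
      using r by (simp add: Ef_def norm_mult norm_power)
  qed
qed

lemma rad_X: "fps_conv_radius (1 - fps_X ^ k :: 'a::{banach, real_normed_field} fps) = \<infinity>"
proof -
  have "fps_conv_radius (1 - fps_X ^ k :: 'a fps) \<ge> min (fps_conv_radius 1) (fps_conv_radius (fps_X ^ k :: 'a fps))"
    using fps_conv_radius_diff[of "1::'a fps" "fps_X ^ k"] by simp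
  then show ?thesis by simp
qed

lemma eval_Ef:
  fixes z :: "'a::{banach, real_normed_field}"
  assumes "norm z < 1"
  shows "eval_fps (Ef m) z = inverse (1 - z ^ Suc m)"
proof -
  have r: "norm z < fps_conv_radius (Ef m :: 'a fps)"
    using rad_Ef[where 'a='a, of m] assms by (metis ereal_less(3) less_le_trans one_ereal_def) 
  have "eval_fps ((Ef m :: 'a fps) * (1 - fps_X ^ Suc m)) z = eval_fps (Ef m) z * eval_fps (1 - fps_X ^ Suc m) z"
    by (rule eval_fps_mult[OF r]) (use rad_X[of "Suc m", where 'a='a] in simp)
  also have "eval_fps (1 - fps_X ^ Suc m :: 'a fps) z = 1 - z ^ Suc m"
    by (subst eval_fps_diff) (simp_all del: power_Suc)
  finally have "eval_fps (Ef m) z * (1 - z ^ Suc m) = 1" by (simp only: Ef_inv eval_fps_1)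
  then have "(1 - z ^ Suc m) * eval_fps (Ef m) z = 1" by (simp only: mult.commute)
  from inverse_unique[OF this] show ?thesis by simp
qed

lemma rad_Qf: "fps_conv_radius (Qf M :: 'a::{banach, real_normed_field} fps) \<ge> 1"
proof (induction M)
  case 0
  then show ?case by (simp add: Qf_def)
next
  case (Suc M)
  have "1 \<le> min (fps_conv_radius (Qf M :: 'a fps)) (fps_conv_radius ((Ef M :: 'a fps) ^ 6))"
    using Suc order_trans[OF rad_Ef[where 'a='a, of M] fps_conv_radius_power] by simp
  also have "\<dots> \<le> fps_conv_radius (Qf (Suc M) :: 'a fps)"
    unfolding Qf_Suc by (rule fps_conv_radius_mult)
  finally show ?case .
qed

lemma eval_Qf:
  fixes z :: "'a::{banach, real_normed_field}"
  assumes "norm z < 1"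
  shows "eval_fps (Qf M) z = inverse ((\<Prod>m<M. 1 - z ^ Suc m) ^ 6)"
proof (induction M)
  case 0
  then show ?case by (simp add: Qf_def)
next
  case (Suc M)
  have lt: "norm z < fps_conv_radius (F :: 'a fps)" if "fps_conv_radius F \<ge> 1" for F
    using that assms by (metis ereal_less(3) less_le_trans one_ereal_def)
  have rE: "norm z < fps_conv_radius (Ef M :: 'a fps)" by (rule lt[OF rad_Ef])
  have "eval_fps (Qf (Suc M)) z = eval_fps (Qf M) z * eval_fps ((Ef M :: 'a fps) ^ 6) z"
    unfolding Qf_Suc
    by (rule eval_fps_mult[OF lt[OF rad_Qf]]) (rule lt, rule order_trans[OF rad_Ef fps_conv_radius_power])
  also have "eval_fps ((Ef M :: 'a fps) ^ 6) z = eval_fps (Ef M) z ^ 6"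
    by (rule eval_fps_power[OF rE])
  finally show ?case using Suc assms by (simp add: eval_Ef power_inverse inverse_mult_distrib power_mult_distrib)
qed

lemma conv_prod_q:
  fixes q :: "'a::{banach, real_normed_field}"
  assumes "norm q < 1"
  shows "convergent_prod (\<lambda>n. 1 - q ^ Suc n)"
proof -
  have "summable (\<lambda>i. norm q * norm q ^ i)"
    using assms by (intro summable_mult summable_geometric) simp
  moreover have "norm ((1 - q ^ Suc i) - 1) = norm q * norm q ^ i" for i by (simp add: norm_mult norm_power)
  ultimately have "summable (\<lambda>i. norm ((1 - q ^ Suc i) - 1))" by simp
  then show ?thesis by (intro abs_convergent_prod_imp_convergent_prod summable_imp_abs_convergent_prod)
qed

lemma factor_nz:
  fixes q :: "'a::{banach, real_normed_field}"
  assumes "norm q < 1"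
  shows "1 - q ^ Suc n \<noteq> 0"
proof
  assume "1 - q ^ Suc n = 0"
  then have "norm (q ^ Suc n) = 1" by (simp add: eq_iff_diff_eq_0[symmetric])
  moreover have "norm (q ^ Suc n) < 1"
    using assms power_less_one_iff[of "norm q" "Suc n"] by (simp add: norm_power del: power_Suc)
  ultimately show False by simp
qed

lemma eta_series:
  fixes q :: complex
  assumes q: "norm q < 1"
  shows "summable (\<lambda>k. norm (of_nat (pp k) * q ^ k))"
    and "(\<lambda>k. of_nat (pp k) * q ^ k) sums inverse ((\<Prod>n. 1 - q ^ Suc n) ^ 6)"
proof -
  define x where "x = norm q"
  have x0: "0 \<le> x" and x1: "x < 1" using q by (auto simp: x_def)
  define b where "b = (\<lambda>k. real (pp k) * x ^ k)"
  have b0: "0 \<le> b k" for k using x0 by (simp add: b_def)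
  define Pr where "Pr = (\<Prod>n. 1 - x ^ Suc n)"
  have cpr: "convergent_prod (\<lambda>n. 1 - x ^ Suc n)" using conv_prod_q[of x] x0 x1 by simp
  have fpos: "0 < 1 - x ^ Suc n" for n using x0 x1 power_less_one_iff[of x "Suc n"] by (simp del: power_Suc)
  have Pr0: "0 < Pr" unfolding Pr_def by (rule less_0_prodinf[OF cpr fpos])
  have prodK: "Pr \<le> (\<Prod>m<K. 1 - x ^ Suc m)" for K
    unfolding Pr_def
    by (rule prod_ge_prodinf) (use cpr fpos x0 in \<open>auto intro: less_imp_le simp: convergent_prod_has_prod\<close>)
  have bsum: "(\<Sum>k<K. b k) \<le> inverse (Pr ^ 6)" for K
  proof -
    have rx: "norm x < fps_conv_radius (Qf K :: real fps)"
    proof -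
      have "ereal (norm x) < 1" using x0 x1 by simp
      then show ?thesis using rad_Qf[where 'a=real, of K] by (rule less_le_trans)
    qed
    have "(\<Sum>k<K. b k) = (\<Sum>k<K. (Qf K :: real fps) $ k * x ^ k)"
    proof (rule sum.cong[OF refl])
      fix k assume "k \<in> {..<K}"
      then have "(Qf K :: nat fps) $ k = pp k" by (intro Qf_pp) simp
      then show "b k = (Qf K :: real fps) $ k * x ^ k" by (simp add: b_def Qf_nth[where 'a=real])
    qed
    also have "\<dots> \<le> (\<Sum>k. (Qf K :: real fps) $ k * x ^ k)"
    proof (rule sum_le_suminf)
      show "summable (\<lambda>k. (Qf K :: real fps) $ k * x ^ k)" using summable_fps[OF rx] .
      show "0 \<le> (Qf K :: real fps) $ n * x ^ n" for n using x0 by (simp add: Qf_nth[where 'a=real])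
    qed simp
    also have "\<dots> = eval_fps (Qf K) x" by (simp add: eval_fps_def)
    also have "\<dots> = inverse ((\<Prod>m<K. 1 - x ^ Suc m) ^ 6)" using x0 x1 by (simp add: eval_Qf)
    also have "\<dots> \<le> inverse (Pr ^ 6)"
    proof (rule le_imp_inverse_le)
      show "Pr ^ 6 \<le> (\<Prod>m<K. 1 - x ^ Suc m) ^ 6"
        by (rule power_mono[OF prodK]) (use Pr0 in simp)
      show "0 < Pr ^ 6" using Pr0 by simp
    qed
    finally show ?thesis .
  qed
  have sb: "summable b" by (rule summableI_nonneg_bounded[OF b0 bsum])
  have nb: "norm (of_nat (pp k) * q ^ k) = b k" for k by (simp add: b_def x_def norm_mult norm_power)
  show sn: "summable (\<lambda>k. norm (of_nat (pp k) * q ^ k :: complex))" using sb by (simp add: nb)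
  define P where "P = (\<Sum>k. of_nat (pp k) * q ^ k :: complex)"
  have sP: "(\<lambda>k. of_nat (pp k) * q ^ k :: complex) sums P" unfolding P_def
    by (rule summable_sums[OF summable_norm_cancel[OF sn]])
  define ev where "ev = (\<lambda>M. eval_fps (Qf M :: complex fps) q)"
  define Pc where "Pc = (\<Prod>n. 1 - q ^ Suc n)"
  have cp: "convergent_prod (\<lambda>n. 1 - q ^ Suc n)" by (rule conv_prod_q[OF q])
  have Pc0: "Pc \<noteq> 0" unfolding Pc_def by (rule prodinf_nonzero[OF cp factor_nz[OF q]])
  have L1: "ev \<longlonglongrightarrow> inverse (Pc ^ 6)"
  proof -
    have "(\<lambda>n. \<Prod>i\<le>n. 1 - q ^ Suc i) \<longlonglongrightarrow> Pc" unfolding Pc_def by (rule convergent_prod_LIMSEQ[OF cp])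
    then have "(\<lambda>n. \<Prod>i<Suc n. 1 - q ^ Suc i) \<longlonglongrightarrow> Pc" by (simp add: lessThan_Suc_atMost)
    then have "(\<lambda>n. \<Prod>i<n. 1 - q ^ Suc i) \<longlonglongrightarrow> Pc" by (rule LIMSEQ_imp_Suc)
    then have "(\<lambda>n. inverse ((\<Prod>i<n. 1 - q ^ Suc i) ^ 6)) \<longlonglongrightarrow> inverse (Pc ^ 6)"
      using Pc0 by (intro tendsto_inverse tendsto_power) auto
    then show ?thesis unfolding ev_def using q by (simp add: eval_Qf)
  qed
  have L2: "ev \<longlonglongrightarrow> P"
  proof -
    define g where "g = (\<lambda>M. suminf b - (\<Sum>k<M. b k))"
    have g0: "g \<longlonglongrightarrow> 0"
    proof -
      have "(\<lambda>M. suminf b - (\<Sum>k<M. b k)) \<longlonglongrightarrow> suminf b - suminf b"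
        by (intro tendsto_diff tendsto_const summable_LIMSEQ[OF sb])
      then show ?thesis by (simp add: g_def)
    qed
    have "norm (ev M - P) \<le> g M" for M
    proof -
      have rq: "norm q < fps_conv_radius (Qf M :: complex fps)"
      proof -
        have "ereal (norm q) < 1" using q by simp
        then show ?thesis using rad_Qf[where 'a=complex, of M] by (rule less_le_trans)
      qed
      define d where "d = (\<lambda>k. ((Qf M :: complex fps) $ k - of_nat (pp k)) * q ^ k)"
      define bt where "bt = (\<lambda>k. if k < M then 0 else b k)"
      have dle: "norm (d k) \<le> bt k" for k
      proof (cases "k < M")
        case True
        then show ?thesis by (simp add: d_def bt_def Qf_nth[where 'a=complex] Qf_pp)
      next
        case False
        then have le: "(Qf M :: nat fps) $ k \<le> pp k" by (intro Qf_le_pp) simp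
        have "norm ((Qf M :: complex fps) $ k - of_nat (pp k)) = real (pp k) - real ((Qf M :: nat fps) $ k)"
        proof -
          have e: "(Qf M :: complex fps) $ k - of_nat (pp k) = - of_nat (pp k - (Qf M :: nat fps) $ k)"
            using le by (simp add: Qf_nth[where 'a=complex] of_nat_diff)
          have "norm ((Qf M :: complex fps) $ k - of_nat (pp k)) = real (pp k - (Qf M :: nat fps) $ k)"
            unfolding e by (simp only: norm_minus_cancel norm_of_nat)
          then show ?thesis using le by (simp add: of_nat_diff)
        qed
        also have "\<dots> \<le> real (pp k)" by simp
        finally show ?thesis using False x0
          by (simp add: d_def bt_def b_def norm_mult norm_power x_def mult_right_mono)
      qed
      have sbt: "summable bt"
        by (rule summable_comparison_test'[OF sb]) (simp add: bt_def b0)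
      have snd: "summable (\<lambda>k. norm (d k))"
        by (rule summable_comparison_test'[OF sbt]) (simp add: dle)
      have "ev M - P = (\<Sum>k. (Qf M :: complex fps) $ k * q ^ k) - (\<Sum>k. of_nat (pp k) * q ^ k)"
        by (simp add: ev_def P_def eval_fps_def)
      also have "\<dots> = suminf d"
        unfolding d_def
        by (subst suminf_diff[OF summable_fps[OF rq] summable_norm_cancel[OF sn]]) (simp add: algebra_simps)
      finally have "norm (ev M - P) = norm (suminf d)" by simp
      also have "\<dots> \<le> (\<Sum>k. norm (d k))" by (rule summable_norm[OF snd])
      also have "\<dots> \<le> suminf bt" by (rule suminf_le[OF dle snd sbt])
      also have "suminf bt = (\<Sum>n. bt (n + M)) + (\<Sum>i<M. bt i)" by (rule suminf_split_initial_segment[OF sbt])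
      also have "\<dots> = (\<Sum>n. b (n + M))" by (simp add: bt_def)
      also have "\<dots> = g M" unfolding g_def by (rule suminf_minus_initial_segment[OF sb])
      finally show ?thesis .
    qed
    then have "(\<lambda>M. ev M - P) \<longlonglongrightarrow> 0"
      by (intro Lim_null_comparison[OF _ g0]) auto
    then show ?thesis by (simp add: LIM_zero_iff)
  qed
  have "P = inverse (Pc ^ 6)" using LIMSEQ_unique[OF L2 L1] .
  then show "(\<lambda>k. of_nat (pp k) * q ^ k) sums inverse ((\<Prod>n. 1 - q ^ Suc n) ^ 6)"
    using sP by (simp add: Pc_def)
qed



definition T :: "int \<Rightarrow> int" where "T a = a * (a - 1) div 2"

lemma T2: "2 * T a = a * (a - 1)"
proof -
  have "even (a * (a - 1))" by simp
  then show ?thesis unfolding T_def by simp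
qed

lemma T_Suc: "T (a + 1) = T a + a"
  using T2[of a] T2[of "a + 1"] by (simp add: algebra_simps)

lemma T_pred: "T (a - 1) = T a - a + 1"
  using T2[of a] T2[of "a - 1"] by (simp add: algebra_simps)

lemma T_nonneg: "T a \<ge> 0"
proof -
  have "a * (a - 1) \<ge> 0"
    by (cases "a \<ge> 1") (auto intro: mult_nonneg_nonneg mult_nonpos_nonpos)
  then show ?thesis using T2[of a] by simp
qed

lemma ratio_sum:
  fixes F :: "nat \<Rightarrow> real" and c :: "nat \<Rightarrow> real"
  assumes "\<And>n. F (Suc n) = F n * c n" "\<And>n. F n \<ge> 0" "c \<longlonglongrightarrow> 0"
  shows "summable F"
proof -
  have "eventually (\<lambda>n. c n < 1/2) sequentially"
    using assms(3) by (rule order_tendstoD(2)) simp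
  then obtain N where N: "\<And>n. n \<ge> N \<Longrightarrow> c n < 1/2" by (auto simp: eventually_sequentially)
  show ?thesis
  proof (rule summable_ratio_test[of "1/2" N])
    fix n assume "n \<ge> N"
    then have cn: "c n < 1/2" by (rule N)
    have "norm (F (Suc n)) = F n * c n" using assms(1,2)[of n] assms(2)[of "Suc n"] by simp
    also have "\<dots> \<le> F n * (1/2)" using cn assms(2)[of n] by (intro mult_left_mono) auto
    finally show "norm (F (Suc n)) \<le> 1/2 * norm (F n)" using assms(2)[of n] by simp
  qed simp
qed

lemma theta_abs_summable:
  fixes q \<zeta> :: complex
  assumes q1: "norm q < 1" and q0: "q \<noteq> 0" and z0: "\<zeta> \<noteq> 0"
  shows "(\<lambda>a::int. norm ((-1) powi a * q powi T a * \<zeta> powi a)) summable_on UNIV"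
proof -
  define \<rho> where "\<rho> = norm q"
  define \<sigma> where "\<sigma> = norm \<zeta>"
  have \<rho>0: "\<rho> > 0" and \<rho>1: "\<rho> < 1" using q0 q1 by (auto simp: \<rho>_def)
  have \<sigma>0: "\<sigma> > 0" using z0 by (simp add: \<sigma>_def)
  define V where "V = (\<lambda>a::int. \<rho> powi T a * \<sigma> powi a)"
  have nv: "norm ((-1) powi a * q powi T a * \<zeta> powi a) = V a" for a
    by (simp add: V_def \<rho>_def \<sigma>_def norm_mult norm_power_int)
  have V0: "V a \<ge> 0" for a using \<rho>0 \<sigma>0 by (simp add: V_def)
  have pw: "(\<lambda>n. \<rho> ^ n) \<longlonglongrightarrow> 0" using \<rho>0 \<rho>1 by (intro LIMSEQ_power_zero) simp
  have s1: "summable (\<lambda>n. V (int n))"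
  proof (rule ratio_sum[where c = "\<lambda>n. \<rho> ^ n * \<sigma>"])
    fix n
    have "V (int (Suc n)) = \<rho> powi (T (int n) + int n) * \<sigma> powi (int n + 1)"
      by (simp only: V_def of_nat_Suc add.commute[of 1 "int n"] T_Suc)
    also have "\<dots> = V (int n) * (\<rho> ^ n * \<sigma>)"
      using \<rho>0 \<sigma>0 by (simp add: V_def power_int_add mult_ac)
    finally show "V (int (Suc n)) = V (int n) * (\<rho> ^ n * \<sigma>)" .
    show "V (int n) \<ge> 0" by (rule V0)
    show "(\<lambda>n. \<rho> ^ n * \<sigma>) \<longlonglongrightarrow> 0" by (rule tendsto_mult_left_zero[OF pw])
  qed
  have s2: "summable (\<lambda>n. V (- int n - 1))"
  proof (rule ratio_sum[where c = "\<lambda>n. \<rho> ^ n * (\<rho> ^ 2 / \<sigma>)"])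
    fix n
    have e: "- int (Suc n) - 1 = (- int n - 1) - 1" by simp
    have "V (- int (Suc n) - 1) = \<rho> powi (T (- int n - 1) + (int n + 2)) * \<sigma> powi ((- int n - 1) + (-1))"
      unfolding e V_def T_pred by (simp add: algebra_simps)
    also have "\<dots> = V (- int n - 1) * (\<rho> ^ n * (\<rho> ^ 2 / \<sigma>))"
    proof -
      have a1: "\<rho> powi (T (- int n - 1) + (int n + 2)) = \<rho> powi T (- int n - 1) * (\<rho> ^ n * \<rho> ^ 2)"
        using power_int_add[of \<rho> "T (- int n - 1)" "int n + 2"] power_int_add[of \<rho> "int n" 2] \<rho>0 by simp
      have a2: "\<sigma> powi ((- int n - 1) + (-1)) = \<sigma> powi (- int n - 1) / \<sigma>"
        using power_int_add[of \<sigma> "- int n - 1" "-1"] \<sigma>0 by (simp add: divide_inverse)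
      show ?thesis unfolding a1 a2 V_def by (simp add: field_simps)
    qed
    finally show "V (- int (Suc n) - 1) = V (- int n - 1) * (\<rho> ^ n * (\<rho> ^ 2 / \<sigma>))" .
    show "V (- int n - 1) \<ge> 0" by (rule V0)
    show "(\<lambda>n. \<rho> ^ n * (\<rho> ^ 2 / \<sigma>)) \<longlonglongrightarrow> 0" by (rule tendsto_mult_left_zero[OF pw])
  qed
  have u1: "V summable_on range int"
  proof -
    have "(V \<circ> int) summable_on UNIV"
      using s1 V0 by (subst summable_on_UNIV_nonneg_real_iff) (auto simp: o_def)
    then show ?thesis by (subst summable_on_reindex) (auto simp: inj_on_def)
  qed
  have u2: "V summable_on range (\<lambda>n. - int n - 1)"
  proof -
    have "(V \<circ> (\<lambda>n. - int n - 1)) summable_on UNIV"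
      using s2 V0 by (subst summable_on_UNIV_nonneg_real_iff) (auto simp: o_def)
    then show ?thesis by (subst summable_on_reindex) (auto simp: inj_on_def)
  qed
  have "range int \<union> range (\<lambda>n. - int n - 1) = (UNIV :: int set)"
  proof -
    have "x \<in> range int \<union> range (\<lambda>n. - int n - 1)" for x :: int
    proof (cases "x \<ge> 0")
      case True
      then have "x = int (nat x)" by simp
      then show ?thesis by blast
    next
      case False
      then have "x = - int (nat (- x - 1)) - 1" by simp
      then show ?thesis by blast
    qed
    then show ?thesis by blast
  qed
  then have "V summable_on UNIV" using summable_on_union[OF u1 u2] by simp
  then show ?thesis by (simp add: nv)
qed

lemma theta_term:
  fixes \<tau> z :: complex and a :: int
  shows "(-1) powi a * exp (2 * pi * \<i> * (\<tau> * (of_int a - 1/2)^2 / 2 + z * (of_int a - 1/2)))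
   = exp (2 * pi * \<i> * (\<tau> / 8 - z / 2)) * ((-1) powi a * exp (2 * pi * \<i> * \<tau>) powi T a * exp (2 * pi * \<i> * z) powi a)"
proof -
  have tc: "2 * (of_int (T a) :: complex) = of_int a * (of_int a - 1)"
    using arg_cong[OF T2[of a], of "of_int :: int \<Rightarrow> complex"] by simp
  then have tc': "(of_int (T a) :: complex) = of_int a * (of_int a - 1) / 2" by (simp add: eq_divide_eq mult.commute)
  have ex: "2 * pi * \<i> * (\<tau> * (of_int a - 1/2)^2 / 2 + z * (of_int a - 1/2)) =
     2 * pi * \<i> * (\<tau> / 8 - z / 2) + (of_int (T a) * (2 * pi * \<i> * \<tau>) + of_int a * (2 * pi * \<i> * z))"
    unfolding tc' by (simp add: field_simps power2_eq_square)
  show ?thesis unfolding exp_powi ex exp_add by (simp add: mult_ac)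
qed

lemma has_sum_product:
  fixes f :: "'a \<Rightarrow> complex" and g :: "'b \<Rightarrow> complex"
  assumes nf: "(\<lambda>x. norm (f x)) summable_on A" and hf: "(f has_sum a) A"
    and ng: "(\<lambda>y. norm (g y)) summable_on B" and hg: "(g has_sum b) B"
  shows "((\<lambda>(x, y). f x * g y) has_sum (a * b)) (A \<times> B)"
    and "(\<lambda>p. norm ((\<lambda>(x, y). f x * g y) p)) summable_on (A \<times> B)"
proof -
  have inner: "\<forall>x\<in>A. (\<lambda>y. norm (f x * g y)) summable_on B"
    using summable_on_cmult_right[OF ng] by (simp add: norm_mult)
  have outer: "(\<lambda>x. norm (infsum (\<lambda>y. norm (f x * g y)) B)) summable_on A"
  proof -
    have "(\<lambda>x. norm (f x) * infsum (\<lambda>y. norm (g y)) B) summable_on A"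
      by (rule summable_on_cmult_left[OF nf])
    moreover have "norm (infsum (\<lambda>y. norm (f x * g y)) B) = norm (f x) * infsum (\<lambda>y. norm (g y)) B" for x
    proof -
      have "infsum (\<lambda>y. norm (f x * g y)) B = norm (f x) * infsum (\<lambda>y. norm (g y)) B"
        by (simp add: norm_mult infsum_cmult_right')
      moreover have "infsum (\<lambda>y. norm (g y)) B \<ge> 0" by (rule infsum_nonneg) simp
      ultimately show ?thesis by simp
    qed
    ultimately show ?thesis by simp
  qed
  have abs: "(\<lambda>p. norm ((\<lambda>(x, y). f x * g y) p)) summable_on Sigma A (\<lambda>_. B)"
    using Infinite_Sum.abs_summable_on_Sigma_iff[where f="\<lambda>(x, y). f x * g y" and A=A and B="\<lambda>_. B"] inner outer by simp
  then show "(\<lambda>p. norm ((\<lambda>(x, y). f x * g y) p)) summable_on (A \<times> B)" by simp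
  show "((\<lambda>(x, y). f x * g y) has_sum (a * b)) (A \<times> B)"
  proof (rule has_sum_SigmaI)
    show "((\<lambda>y. case (x, y) of (x, y) \<Rightarrow> f x * g y) has_sum f x * b) B" if "x \<in> A" for x
      using has_sum_cmult_right[OF hg, of "f x"] by simp
    show "((\<lambda>x. f x * b) has_sum a * b) A" by (rule has_sum_cmult_left[OF hf])
    show "(\<lambda>(x, y). f x * g y) summable_on Sigma A (\<lambda>_. B)"
      using abs by (rule abs_summable_summable)
  qed
qed

lemma T_bound: "T a \<le> n \<Longrightarrow> \<bar>a\<bar> \<le> \<bar>n\<bar> + 1"
proof (rule ccontr)
  assume Ta: "T a \<le> n" and "\<not> \<bar>a\<bar> \<le> \<bar>n\<bar> + 1"
  then have m: "\<bar>a\<bar> \<ge> \<bar>n\<bar> + 2" by simp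
  have "a * (a - 1) \<ge> \<bar>a\<bar> * (\<bar>a\<bar> - 1)"
  proof (cases "a \<ge> 0")
    case True then show ?thesis by simp
  next
    case False
    then have "a * (a - 1) = \<bar>a\<bar> * (\<bar>a\<bar> + 1)" by (simp add: algebra_simps)
    moreover have "\<bar>a\<bar> * (\<bar>a\<bar> - 1) \<le> \<bar>a\<bar> * (\<bar>a\<bar> + 1)" by (intro mult_left_mono) auto
    ultimately show ?thesis by simp
  qed
  moreover have "\<bar>a\<bar> * (\<bar>a\<bar> - 1) \<ge> 2 * (\<bar>a\<bar> - 1)"
    by (rule mult_right_mono) (use m in auto)
  ultimately have "2 * T a \<ge> 2 * (\<bar>a\<bar> - 1)" using T2[of a] by simp
  then show False using Ta m by simp
qed

definition hh :: "(int \<times> int) \<times> nat \<Rightarrow> int \<times> int" where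
  "hh x = (case x of ((a, b), k) \<Rightarrow> (T a + T b + int k, a + b - 1))"

definition fib :: "int \<Rightarrow> int \<Rightarrow> ((int \<times> int) \<times> nat) set" where
  "fib n r = {x. hh x = (n, r)}"

definition sg :: "(int \<times> int) \<times> nat \<Rightarrow> complex" where
  "sg x = (case x of ((a, b), k) \<Rightarrow> (-1) powi (a + b) * of_nat (pp k))"

definition cc :: "int \<Rightarrow> int \<Rightarrow> complex" where
  "cc n r = (\<Sum>x\<in>fib n r. sg x)"

lemma finite_fib: "finite (fib n r)"
proof -
  define N where "N = \<bar>n\<bar> + 1"
  have "fib n r \<subseteq> ({-N..N} \<times> {-N..N}) \<times> {..nat n}"
  proof
    fix x assume "x \<in> fib n r"
    then obtain a b k where x: "x = ((a, b), k)" and e: "T a + T b + int k = n"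
      by (auto simp: fib_def hh_def split: prod.splits)
    have "T a \<le> n" "T b \<le> n" "int k \<le> n" using e T_nonneg[of a] T_nonneg[of b] by auto
    then have "\<bar>a\<bar> \<le> \<bar>n\<bar> + 1" "\<bar>b\<bar> \<le> \<bar>n\<bar> + 1" "k \<le> nat n" using T_bound[of a n] T_bound[of b n] by auto
    then have "\<bar>a\<bar> \<le> N" "\<bar>b\<bar> \<le> N" "k \<le> nat n" unfolding N_def by auto
    then show "x \<in> ({-N..N} \<times> {-N..N}) \<times> {..nat n}" using x by auto
  qed
  then show ?thesis by (rule finite_subset) auto
qed

lemma phi_expansion:
  fixes \<tau> z :: complex
  assumes tau: "Im \<tau> > 0"
  shows "((\<lambda>(n, r). cc n r * exp (2 * pi * \<i> * \<tau>) powi n * exp (2 * pi * \<i> * z) powi r) has_sum phi_m2_1 \<tau> z) UNIV"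
proof -
  define q where "q = exp (2 * pi * \<i> * \<tau>)"
  define \<zeta> where "\<zeta> = exp (2 * pi * \<i> * z)"
  have q0: "q \<noteq> 0" and z0: "\<zeta> \<noteq> 0" by (simp_all add: q_def \<zeta>_def)
  have q1: "norm q < 1"
  proof -
    have "norm q = exp (- (2 * pi * Im \<tau>))" by (simp add: q_def norm_exp_eq_Re)
    also have "\<dots> < 1" using tau by simp
    finally show ?thesis .
  qed
  define v where "v = (\<lambda>a::int. (-1) powi a * q powi T a * \<zeta> powi a)"
  have nv: "(\<lambda>a. norm (v a)) summable_on UNIV" unfolding v_def by (rule theta_abs_summable[OF q1 q0 z0])
  define S where "S = infsum v UNIV"
  have hv: "(v has_sum S) UNIV" unfolding S_def using abs_summable_summable[OF nv]
    by (simp add: summable_iff_has_sum_infsum)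
  define K where "K = exp (2 * pi * \<i> * (\<tau> / 8 - z / 2))"
  have th: "theta1 \<tau> z = K * S"
  proof -
    have "theta1 \<tau> z = infsum (\<lambda>a. K * v a) UNIV"
      unfolding theta1_def K_def v_def q_def \<zeta>_def by (rule infsum_cong) (rule theta_term)
    then show ?thesis by (simp add: infsum_cmult_right' S_def)
  qed
  define Pc where "Pc = (\<Prod>n. 1 - q ^ Suc n)"
  have Pc0: "Pc \<noteq> 0" unfolding Pc_def by (rule prodinf_nonzero[OF conv_prod_q[OF q1] factor_nz[OF q1]])
  have eta: "dedekind_eta \<tau> = exp (2 * pi * \<i> * \<tau> / 24) * Pc" by (simp add: dedekind_eta_def Pc_def q_def)
  have hp: "((\<lambda>k. of_nat (pp k) * q ^ k) has_sum inverse (Pc ^ 6)) UNIV"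
    unfolding Pc_def by (rule norm_summable_imp_has_sum[OF eta_series(1)[OF q1] eta_series(2)[OF q1]])
  have np: "(\<lambda>k. norm (of_nat (pp k) * q ^ k)) summable_on UNIV"
    using eta_series(1)[OF q1] by (subst summable_on_UNIV_nonneg_real_iff) auto
  have K2: "K ^ 2 = exp (2 * pi * \<i> * \<tau> / 24) ^ 6 * \<zeta> powi (-1)"
  proof -
    have "K ^ 2 = exp (of_nat 2 * (2 * pi * \<i> * (\<tau> / 8 - z / 2)))" unfolding K_def by (rule exp_of_nat_mult[symmetric])
    also have "2 * pi * \<i> * (\<tau> / 8 - z / 2) * of_nat 2 = of_nat 6 * (2 * pi * \<i> * \<tau> / 24) + - (2 * pi * \<i> * z)"
      by (simp add: field_simps)
    then have "exp (of_nat 2 * (2 * pi * \<i> * (\<tau> / 8 - z / 2))) = exp (of_nat 6 * (2 * pi * \<i> * \<tau> / 24) + - (2 * pi * \<i> * z))"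
      by (simp add: mult.commute)
    also have "\<dots> = exp (2 * pi * \<i> * \<tau> / 24) ^ 6 * \<zeta> powi (-1)"
      unfolding exp_add exp_of_nat_mult exp_minus \<zeta>_def by (simp add: power_int_minus)
    finally show ?thesis .
  qed
  have phi: "phi_m2_1 \<tau> z = S * S * inverse (Pc ^ 6) * \<zeta> powi (-1)"
  proof -
    have E0: "exp (2 * pi * \<i> * \<tau> / 24) ^ 6 \<noteq> 0" by simp
    have "phi_m2_1 \<tau> z = (K ^ 2 * S ^ 2) / (exp (2 * pi * \<i> * \<tau> / 24) ^ 6 * Pc ^ 6)"
      by (simp add: phi_m2_1_def th eta power_mult_distrib)
    also have "\<dots> = S * S * inverse (Pc ^ 6) * \<zeta> powi (-1)"
      unfolding K2 using E0 Pc0 by (simp add: field_simps power2_eq_square)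
    finally show ?thesis .
  qed
  have hvv: "((\<lambda>(a, b). v a * v b) has_sum S * S) (UNIV \<times> UNIV)"
    and nvv: "(\<lambda>p. norm ((\<lambda>(a, b). v a * v b) p)) summable_on (UNIV \<times> UNIV)"
    using has_sum_product[OF nv hv nv hv] by auto
  have hall: "((\<lambda>(ab, k). (\<lambda>(a, b). v a * v b) ab * (of_nat (pp k) * q ^ k)) has_sum (S * S * inverse (Pc ^ 6))) ((UNIV \<times> UNIV) \<times> UNIV)"
    by (rule has_sum_product(1)[OF nvv hvv np hp])
  define G where "G = (\<lambda>x. sg x * q powi fst (hh x) * \<zeta> powi snd (hh x))"
  have hG: "(G has_sum phi_m2_1 \<tau> z) UNIV"
  proof -
    have "((\<lambda>x. (\<lambda>(ab, k). (\<lambda>(a, b). v a * v b) ab * (of_nat (pp k) * q ^ k)) x * \<zeta> powi (-1)) has_sum (S * S * inverse (Pc ^ 6) * \<zeta> powi (-1))) ((UNIV \<times> UNIV) \<times> UNIV)"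
      by (rule has_sum_cmult_left[OF hall])
    moreover have "(\<lambda>(ab, k). (\<lambda>(a, b). v a * v b) ab * (of_nat (pp k) * q ^ k)) x * \<zeta> powi (-1) = G x" for x
    proof -
      define a where "a = fst (fst x)"
      define b where "b = snd (fst x)"
      define k where "k = snd x"
      have x: "x = ((a, b), k)" by (simp add: a_def b_def k_def)
      have e1: "(-1::complex) powi (a + b) = (-1) powi a * (-1) powi b" by (simp add: power_int_add)
      have e2: "q powi (T a + T b + int k) = q powi T a * q powi T b * q ^ k"
        using q0 power_int_add[of q "T a + T b" "int k"] power_int_add[of q "T a" "T b"] by simp
      have e3: "\<zeta> powi (a + b - 1) = \<zeta> powi a * \<zeta> powi b * \<zeta> powi (-1)"
        using z0 power_int_add[of \<zeta> "a + b" "-1"] power_int_add[of \<zeta> a b] by simp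
      show ?thesis unfolding x G_def v_def sg_def hh_def by (simp add: e1 e2 e3 mult_ac)
    qed
    ultimately show ?thesis using phi by simp
  qed
  define B where "B = (\<lambda>y::int \<times> int. fib (fst y) (snd y))"
  have hS: "((\<lambda>p. G (snd p)) has_sum phi_m2_1 \<tau> z) (Sigma UNIV B)"
  proof -
    have "(G has_sum phi_m2_1 \<tau> z) UNIV = ((\<lambda>p. G (snd p)) has_sum phi_m2_1 \<tau> z) (Sigma UNIV B)"
      by (rule has_sum_reindex_bij_witness[where i = snd and j = "\<lambda>x. (hh x, x)"]) (auto simp: B_def fib_def)
    with hG show ?thesis by simp
  qed
  have inner: "((\<lambda>x. (\<lambda>p. G (snd p)) (y, x)) has_sum (\<Sum>x\<in>B y. G x)) (B y)" for y
    by (rule has_sum_finiteI) (simp_all add: B_def finite_fib)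
  have outer: "((\<lambda>y. \<Sum>x\<in>B y. G x) has_sum phi_m2_1 \<tau> z) UNIV"
    by (rule has_sum_Sigma'[OF hS inner])
  have eqy: "(\<Sum>x\<in>B y. G x) = (\<lambda>(n, r). cc n r * q powi n * \<zeta> powi r) y" for y
  proof -
    obtain n r where y: "y = (n, r)" by (cases y)
    have "(\<Sum>x\<in>B y. G x) = (\<Sum>x\<in>fib n r. sg x * q powi n * \<zeta> powi r)"
      unfolding y B_def G_def by (rule sum.cong) (auto simp: fib_def)
    also have "\<dots> = cc n r * q powi n * \<zeta> powi r" by (simp add: cc_def sum_distrib_right)
    finally show ?thesis using y by simp
  qed
  have final: "((\<lambda>(n, r). cc n r * q powi n * \<zeta> powi r) has_sum phi_m2_1 \<tau> z) UNIV"
    using outer unfolding eqy by simp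
  then show ?thesis by (simp add: q_def \<zeta>_def)
qed

lemma phi_coeff_eq: "phi_m2_1_coeff = cc"
  unfolding phi_m2_1_coeff_def
proof (rule the_equality)
  show "\<forall>\<tau> z. 0 < Im \<tau> \<longrightarrow> ((\<lambda>(n, r). cc n r * exp (2 * pi * \<i> * \<tau>) powi n * exp (2 * pi * \<i> * z) powi r) has_sum phi_m2_1 \<tau> z) UNIV"
    using phi_expansion by blast
  fix c assume H: "\<forall>\<tau> z. 0 < Im \<tau> \<longrightarrow> ((\<lambda>(n, r). c n r * exp (2 * pi * \<i> * \<tau>) powi n * exp (2 * pi * \<i> * z) powi r) has_sum phi_m2_1 \<tau> z) UNIV"
  show "c = cc"
    by (rule coeff_unique[where P = phi_m2_1]) (use H phi_expansion in blast)+
qed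

lemma neg1_powi_even: "even (j::int) \<Longrightarrow> (-1::complex) powi j = 1"
proof -
  assume "even j"
  then obtain i where j: "j = 2 * i" by (auto elim: evenE)
  show ?thesis by (simp add: j power_int_mult)
qed

lemma fib_nonempty:
  assumes "4 * n - r ^ 2 \<ge> -1"
  shows "\<exists>x. x \<in> fib n r"
proof (cases "even r")
  case True
  then obtain m where r: "r = 2 * m" by (auto elim: evenE)
  define t where "t = n - m * m"
  have "4 * t \<ge> -1" using assms by (simp add: t_def r power2_eq_square algebra_simps)
  then have t0: "t \<ge> 0" by presburger
  have Tm: "T (m + 1) + T m = m * m" using T_Suc[of m] T2[of m] by (simp add: algebra_simps)
  have "hh ((m + 1, m), nat t) = (n, r)"
    using t0 Tm by (simp add: hh_def t_def r)
  then show ?thesis by (auto simp: fib_def)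
next
  case False
  then have er: "even (r + 1)" by simp
  from er obtain m where "r + 1 = 2 * m" by (rule evenE)
  then have r: "r = 2 * m - 1" by simp
  define t where "t = n - m * (m - 1)"
  have "r ^ 2 = 4 * (m * (m - 1)) + 1" by (simp add: r power2_eq_square algebra_simps)
  then have "4 * t \<ge> 0" using assms by (simp add: t_def)
  then have t0: "t \<ge> 0" by simp
  have Tm: "T m + T m = m * (m - 1)" using T2[of m] by simp
  have "hh ((m, m), nat t) = (n, r)"
    using t0 Tm by (simp add: hh_def t_def r)
  then show ?thesis by (auto simp: fib_def)
qed

lemma cc_sign:
  assumes "4 * n - r ^ 2 \<ge> -1"
  shows "\<exists>N::nat. N \<ge> 1 \<and> cc n r = (-1) powi (r + 1) * of_nat N"
proof -
  define N where "N = (\<Sum>x\<in>fib n r. pp (snd x))"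
  have "cc n r = (\<Sum>x\<in>fib n r. (-1) powi (r + 1) * of_nat (pp (snd x)))"
    unfolding cc_def by (rule sum.cong) (auto simp: fib_def hh_def sg_def split: prod.splits)
  also have "\<dots> = (-1) powi (r + 1) * of_nat N" by (simp add: N_def sum_distrib_left)
  finally have e: "cc n r = (-1) powi (r + 1) * of_nat N" .
  obtain x0 where x0: "x0 \<in> fib n r" using fib_nonempty[OF assms] by blast
  have "pp (snd x0) \<le> N" unfolding N_def by (rule member_le_sum) (use x0 finite_fib in auto)
  then have "N \<ge> 1" using pp_pos[of "snd x0"] by simp
  with e show ?thesis by blast
qed

theorem mainTheorem1:
  fixes \<Delta> n r :: int
  assumes "\<Delta> \<ge> -1"
    and "\<Delta> mod 4 = 0 \<or> \<Delta> mod 4 = 3"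
    and "4 * n - r ^ 2 = \<Delta>"
  shows "(-1) powi (\<Delta> + 1) * phi_m2_1_coeff n r \<in> \<real> \<and>
         Re ((-1) powi (\<Delta> + 1) * phi_m2_1_coeff n r) > 0"
proof -
  have e: "4 * n - r ^ 2 \<ge> -1" using assms by simp
  obtain N where N: "N \<ge> 1" "cc n r = (-1) powi (r + 1) * of_nat N" using cc_sign[OF e] by blast
  have ev: "even (\<Delta> - r)"
  proof -
    have "\<Delta> - r = 4 * n - r * (r + 1)" using assms(3) by (simp add: power2_eq_square algebra_simps)
    then show ?thesis by simp
  qed
  have par: "(-1::complex) powi (\<Delta> + 1) = (-1) powi (r + 1)"
  proof -
    have "(-1::complex) powi (\<Delta> + 1) = (-1) powi ((r + 1) + (\<Delta> - r))"
      by (rule arg_cong[where f="\<lambda>k. (-1::complex) powi k"]) simp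
    also have "\<dots> = (-1) powi (r + 1) * (-1) powi (\<Delta> - r)" by (rule power_int_add) simp
    also have "\<dots> = (-1) powi (r + 1)" using neg1_powi_even[OF ev] by simp
    finally show ?thesis .
  qed
  have sq: "(-1::complex) powi (r + 1) * (-1) powi (r + 1) = 1"
  proof -
    have "(-1::complex) powi (r + 1) * (-1) powi (r + 1) = (-1) powi ((r + 1) + (r + 1))" by (rule power_int_add[symmetric]) simp
    also have "\<dots> = 1" by (rule neg1_powi_even) simp
    finally show ?thesis .
  qed
  have val: "(-1) powi (\<Delta> + 1) * phi_m2_1_coeff n r = of_nat N"
    unfolding phi_coeff_eq N(2) par using sq by (simp add: mult.assoc[symmetric])
  show ?thesis unfolding val using N(1) by simp
qed

end
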